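(* Let $\mathbf{K}$ be an associative ring with unit $e$, let $\partial:\mathbf{K}\to\mathbf{K}$ be a derivation (additive and satisfying $\partial(xy)=\partial(x)y+x\partial(y)$), and let $\alpha$ be a ring automorphism of $\mathbf{K}$. Let $P\in\mathbf{K}$ be a constant projector: $P^2=P$, $\partial P=0$, $\alpha(P)=P$. Suppose $x\in\mathbf{K}$ is invertible and satisfies $$\partial(x^{-1}\partial x)=x^{-1}\alpha(x)-\alpha^{-1}(x^{-1})\,x$$ together with $Px=PxP$. Suppose moreover that $z:=PxP$ is invertible in the subring $P\mathbf{K}P$ (whose unit is $P$), with inverse $z^{-1}\in P\mathbf{K}P$. Then $z$ satisfies the same equation in $P\mathbf{K}P$: $$\partial(z^{-1}\partial z)=z^{-1}\alpha(z)-\alpha^{-1}(z^{-1})\,z.$$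
   Context: Here $\alpha^{-1}$ denotes the inverse automorphism. Since $P$ is constant, $\partial$ and $\alpha$ map $P\mathbf{K}P$ into itself. In the paper's application, $\mathbf{K}$ is the ring of bounded operators depending on parameters $k\in\mathbb{Z}$, $t\in\mathbb{R}$, with $\partial$ the $t$-derivative and $\alpha$ the shift $k\mapsto k+1$, and the equation is the abstract Toda lattice equation. *)

theory Defs
  imports Main
begin

definition derivation :: "('a::ring_1 \<Rightarrow> 'a) \<Rightarrow> bool" where
  "derivation d \<longleftrightarrow> (\<forall>a b. d (a + b) = d a + d b) \<and> (\<forall>a b. d (a * b) = d a * b + a * d b)"

definition ring_automorphism :: "('a::ring_1 \<Rightarrow> 'a) \<Rightarrow> bool" where
  "ring_automorphism f \<longleftrightarrow> bij f \<and> (\<forall>a b. f (a + b) = f a + f b) \<and>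
     (\<forall>a b. f (a * b) = f a * f b) \<and> f 1 = 1"

end

theory Submission
  imports Defs
begin

theorem lemma2:
  fixes d \<alpha> :: "'a::ring_1 \<Rightarrow> 'a" and P x xi zi :: 'a
  assumes der: "derivation d"
    and aut: "ring_automorphism \<alpha>"
    and proj: "P * P = P" and dP: "d P = 0" and aP: "\<alpha> P = P"
    and xinv: "x * xi = 1" "xi * x = 1"
    and eqx: "d (xi * d x) = xi * \<alpha> x - inv \<alpha> xi * x"
    and Px: "P * x = P * x * P"
    and zi_in: "zi = P * zi * P"
    and zinv: "(P * x * P) * zi = P" "zi * (P * x * P) = P"
  shows "d (zi * d (P * x * P)) = zi * \<alpha> (P * x * P) - inv \<alpha> zi * (P * x * P)"
proof -
  define z where "z = P * x * P"
  have dadd: "\<And>a b. d (a + b) = d a + d b" and dmul: "\<And>a b. d (a * b) = d a * b + a * d b"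
    using der unfolding derivation_def by auto
  have bij: "bij \<alpha>" and amul: "\<And>a b. \<alpha> (a * b) = \<alpha> a * \<alpha> b"
    using aut unfolding ring_automorphism_def by auto
  have inj: "inj \<alpha>" and surj: "surj \<alpha>" using bij by (auto simp: bij_is_inj bij_is_surj)
  have af: "\<And>y. \<alpha> (inv \<alpha> y) = y" using surj by (simp add: surj_f_inv_f)
  have aimul: "\<And>a b. inv \<alpha> (a * b) = inv \<alpha> a * inv \<alpha> b"
  proof -
    fix a b
    have "\<alpha> (inv \<alpha> a * inv \<alpha> b) = a * b" by (simp add: amul af)
    then show "inv \<alpha> (a * b) = inv \<alpha> a * inv \<alpha> b" using inj by (metis inv_f_f)
  qed
  have aiP: "inv \<alpha> P = P" using inj aP by (metis inv_f_f)
  have dPl: "\<And>a. d (P * a) = P * d a" using dmul dP by simp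
  have dPr: "\<And>a. d (a * P) = d a * P" using dmul dP by simp
  have Pz: "P * x = z" using Px z_def by simp
  have zP: "z * P = z" using z_def proj by (simp add: mult.assoc)
  have Pzz: "P * z = z" using z_def proj by (simp add: mult.assoc[symmetric])
  have ziP: "zi * P = zi" using zi_in proj by (metis mult.assoc)
  have Pzi: "P * zi = zi" using zi_in proj by (metis mult.assoc)
  have Pxi: "P * xi = zi"
  proof -
    have "zi * (P * x * xi) = zi * P" using xinv by (simp add: mult.assoc)
    then have "zi * z * xi = zi" using Pz ziP by (simp add: mult.assoc)
    then show ?thesis using zinv z_def by simp
  qed
  have dz: "d z = P * d x * P" using Pz zP by (metis dPl dPr)
  have dz2: "d z = P * d x" using Pz dPl by metis
  have L1: "P * (xi * d x) = zi * d z"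
    using Pxi dz2 ziP by (metis mult.assoc)
  have L2: "zi * d z = zi * d z * P" using dz proj by (simp add: mult.assoc)
  have LHS: "P * d (xi * d x) * P = d (zi * d z)"
    by (metis L1 L2 dPl dPr)
  have aPx: "P * \<alpha> x = \<alpha> z" using amul aP Pz by metis
  have R1: "P * (xi * \<alpha> x) * P = zi * \<alpha> z"
  proof -
    have "P * (xi * \<alpha> x) * P = zi * (P * \<alpha> x) * P" using Pxi ziP by (metis mult.assoc)
    also have "\<dots> = zi * (\<alpha> z * P)" using aPx by (simp add: mult.assoc)
    also have "\<alpha> z * P = \<alpha> z" using amul aP zP by metis
    finally show ?thesis .
  qed
  have aiPxi: "P * inv \<alpha> xi = inv \<alpha> zi" using aimul aiP Pxi by metis
  have R2: "P * (inv \<alpha> xi * x) * P = inv \<alpha> zi * z"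
  proof -
    have "inv \<alpha> zi * P = inv \<alpha> zi" using aimul aiP ziP by metis
    then have "P * (inv \<alpha> xi * x) * P = inv \<alpha> zi * (P * x * P)"
      using aiPxi by (metis mult.assoc)
    then show ?thesis using z_def by simp
  qed
  have "P * d (xi * d x) * P = P * (xi * \<alpha> x) * P - P * (inv \<alpha> xi * x) * P"
    unfolding eqx by (simp add: right_diff_distrib left_diff_distrib)
  then have "d (zi * d z) = zi * \<alpha> z - inv \<alpha> zi * z" using LHS R1 R2 by simp
  then show ?thesis using z_def by simp
qed

end
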